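(* Let $L$ and $L_0$ be finite lattices and let $\phi: L\to L_0$ be a lattice epimorphism (surjective lattice homomorphism). For $y\in L_0$ let $\sigma(y):=\bigwedge\{x\in L:\ \phi(x)=y\}$ be its smallest pre-image. Fix a nonzero element $v\in L$ with $v=\sigma(\phi(v))$, and let $v/w$ be any prime quotient of $L$ (i.e. $w\prec v$). Let $r/s$ be a prime quotient of $L_0$ which is projective to the quotient $\phi(v)/\phi(w)$. Put $\underline{r}:=\sigma(r)$ and $\underline{s}:=\bigvee\{u\in L:\ u\le \underline{r},\ \phi(u)\le s\}$. Then $\underline{r}/\underline{s}$ is a prime quotient of $L$ and it is projective to $v/w$.
   Context: A quotient $a/b$ in a lattice is a pair with $b\le a$; it is prime if $b\prec a$ ($a$ covers $b$). A quotient $a/b$ transposes up to $c/d$ (and $c/d$ transposes down to $a/b$) if $a\wedge d=b$ and $a\vee d=c$; two quotients are transposed if one transposes up or down to the other. Two quotients are projective if they are connected by a finite sequence of quotients in which consecutive members are transposed. *)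

theory Defs
  imports Main
begin

text \<open>Quotients a/b are represented as pairs (a, b) with b \<le> a.\<close>

definition covers :: "'a::order \<Rightarrow> 'a \<Rightarrow> bool" where
  "covers b a \<longleftrightarrow> b < a \<and> \<not> (\<exists>c. b < c \<and> c < a)"

definition prime_quotient :: "'a::order \<times> 'a \<Rightarrow> bool" where
  "prime_quotient q \<longleftrightarrow> covers (snd q) (fst q)"

definition transposes_up :: "'a::lattice \<times> 'a \<Rightarrow> 'a \<times> 'a \<Rightarrow> bool" where
  "transposes_up q p \<longleftrightarrow> inf (fst q) (snd p) = snd q \<and> sup (fst q) (snd p) = fst p"

definition transposed :: "'a::lattice \<times> 'a \<Rightarrow> 'a \<times> 'a \<Rightarrow> bool" where
  "transposed q p \<longleftrightarrow> transposes_up q p \<or> transposes_up p q"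

definition projective :: "'a::lattice \<times> 'a \<Rightarrow> 'a \<times> 'a \<Rightarrow> bool" where
  "projective q p \<longleftrightarrow> transposed\<^sup>*\<^sup>* q p"

definition lattice_hom :: "('a::lattice \<Rightarrow> 'b::lattice) \<Rightarrow> bool" where
  "lattice_hom f \<longleftrightarrow> (\<forall>x y. f (sup x y) = sup (f x) (f y) \<and> f (inf x y) = inf (f x) (f y))"

end

theory Submission
  imports Defs
begin

definition sg :: "('a::complete_lattice \<Rightarrow> 'b) \<Rightarrow> 'b \<Rightarrow> 'a" where
  "sg f y = Inf {x. f x = y}"

definition lo :: "('a::complete_lattice \<Rightarrow> 'b::order) \<Rightarrow> 'b \<Rightarrow> 'b \<Rightarrow> 'a" where
  "lo f a b = Sup {u. u \<le> sg f a \<and> f u \<le> b}"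

lemma hom_mono:
  assumes "lattice_hom f" "x \<le> y" shows "f x \<le> f y"
proof -
  have "f x = f (inf x y)" using assms(2) by (simp add: inf_absorb1)
  also have "\<dots> = inf (f x) (f y)" using assms(1) unfolding lattice_hom_def by blast
  finally show ?thesis by (metis inf.orderI)
qed

lemma hom_Inf:
  fixes f :: "'a::{finite, complete_lattice} \<Rightarrow> 'b::{finite, complete_lattice}"
  assumes h: "lattice_hom f" and e: "surj f"
  shows "f (Inf S) = Inf (f ` S)"
proof -
  have "finite S" by simp
  then show ?thesis
  proof (induction S rule: finite_induct)
    case empty
    obtain x where x: "f x = top" using e by (metis surjD)
    have "f top = f (sup top x)" by simp
    also have "\<dots> = sup (f top) (f x)" using h unfolding lattice_hom_def by blast
    finally show ?case using x by simp
  next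
    case (insert x F)
    have "f (Inf (insert x F)) = f (inf x (Inf F))" by simp
    also have "\<dots> = inf (f x) (f (Inf F))" using h unfolding lattice_hom_def by blast
    finally show ?case using insert by simp
  qed
qed

lemma hom_Sup:
  fixes f :: "'a::{finite, complete_lattice} \<Rightarrow> 'b::{finite, complete_lattice}"
  assumes h: "lattice_hom f" and e: "surj f"
  shows "f (Sup S) = Sup (f ` S)"
proof -
  have "finite S" by simp
  then show ?thesis
  proof (induction S rule: finite_induct)
    case empty
    obtain x where x: "f x = bot" using e by (metis surjD)
    have "f bot = f (inf bot x)" by simp
    also have "\<dots> = inf (f bot) (f x)" using h unfolding lattice_hom_def by blast
    finally show ?case using x by simp
  next
    case (insert x F)
    have "f (Sup (insert x F)) = f (sup x (Sup F))" by simp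
    also have "\<dots> = sup (f x) (f (Sup F))" using h unfolding lattice_hom_def by blast
    finally show ?case using insert by simp
  qed
qed

context
  fixes f :: "'a::{finite, complete_lattice} \<Rightarrow> 'b::{finite, complete_lattice}"
  assumes h: "lattice_hom f" and e: "surj f"
begin

lemma f_sup: "f (sup x y) = sup (f x) (f y)" using h unfolding lattice_hom_def by blast
lemma f_inf: "f (inf x y) = inf (f x) (f y)" using h unfolding lattice_hom_def by blast

lemma sg_img: "f (sg f y) = y"
proof -
  obtain x0 where x0: "f x0 = y" using e by (metis surjD)
  have "f ` {x. f x = y} = {y}" using x0 by (auto intro: rev_image_eqI[of x0])
  then show ?thesis unfolding sg_def using hom_Inf[OF h e] by simp
qed

lemma sg_le: "f x = y \<Longrightarrow> sg f y \<le> x"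
  unfolding sg_def by (simp add: Inf_lower)

lemma lo_le_sg: "lo f a b \<le> sg f a"
  unfolding lo_def by (rule Sup_least) auto

lemma lo_img_le: "f (lo f a b) \<le> b"
  unfolding lo_def hom_Sup[OF h e] by (rule Sup_least) auto

lemma le_lo: "u \<le> sg f a \<Longrightarrow> f u \<le> b \<Longrightarrow> u \<le> lo f a b"
  unfolding lo_def by (rule Sup_upper) auto

lemma lo_img: assumes "b \<le> a" shows "f (lo f a b) = b"
proof -
  have "inf (sg f a) (sg f b) \<le> lo f a b"
    by (rule le_lo) (auto simp: f_inf sg_img)
  then have "f (inf (sg f a) (sg f b)) \<le> f (lo f a b)" by (rule hom_mono[OF h])
  then have "b \<le> f (lo f a b)" using assms by (simp add: f_inf sg_img inf_absorb2)
  then show ?thesis using lo_img_le by (simp add: antisym)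
qed

lemma lift_up:
  assumes "transposes_up (a, b) (c, d)"
  shows "transposes_up (sg f a, lo f a b) (sg f c, lo f c d)"
proof -
  have ad: "inf a d = b" and ac: "sup a d = c" using assms by (auto simp: transposes_up_def)
  have ba: "b \<le> a" using ad by auto
  have dc: "d \<le> c" using ac by auto
  have ac': "a \<le> c" using ac by auto
  let ?X = "sg f a" and ?Y = "lo f a b" and ?X' = "sg f c" and ?Y' = "lo f c d"
  have XX': "?X \<le> ?X'"
  proof -
    have "f (inf ?X ?X') = a" using ac' by (simp add: f_inf sg_img inf_absorb1)
    then have "?X \<le> inf ?X ?X'" by (rule sg_le)
    then show ?thesis by simp
  qed
  have fY': "f ?Y' = d" using lo_img[OF dc] .
  have fY: "f ?Y = b" using lo_img[OF ba] .
  have "inf ?X ?Y' \<le> ?Y"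
    by (rule le_lo) (auto simp: f_inf sg_img fY' ad)
  moreover have "?Y \<le> ?Y'"
    by (rule le_lo) (use XX' lo_le_sg[of a b] fY ba ad in auto)
  ultimately have 1: "inf ?X ?Y' = ?Y" using lo_le_sg[of a b] by (simp add: antisym)
  have "sup ?X ?Y' \<le> ?X'" using XX' lo_le_sg[of c d] by simp
  moreover have "?X' \<le> sup ?X ?Y'"
    by (rule sg_le) (simp add: f_sup sg_img fY' ac)
  ultimately have 2: "sup ?X ?Y' = ?X'" by (simp add: antisym)
  show ?thesis using 1 2 by (simp add: transposes_up_def)
qed

lemma lift_transposed:
  assumes "transposed q p"
  shows "transposed (sg f (fst q), lo f (fst q) (snd q)) (sg f (fst p), lo f (fst p) (snd p))"
proof -
  obtain a b where q: "q = (a, b)" by (cases q)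
  obtain c d where p: "p = (c, d)" by (cases p)
  show ?thesis using assms lift_up[of a b c d] lift_up[of c d a b] unfolding transposed_def q p
    by auto
qed

lemma lift_proj:
  assumes "transposed\<^sup>*\<^sup>* q p"
  shows "transposed\<^sup>*\<^sup>* (sg f (fst q), lo f (fst q) (snd q)) (sg f (fst p), lo f (fst p) (snd p))"
  using assms
proof (induction rule: rtranclp_induct)
  case base then show ?case by simp
next
  case (step y z)
  show ?case using step.IH lift_transposed[OF step(2)] by (rule rtranclp.rtrancl_into_rtrancl)
qed

lemma lift_prime:
  assumes "prime_quotient (a, b)"
  shows "prime_quotient (sg f a, lo f a b)"
proof -
  have ba: "b < a" using assms by (simp add: prime_quotient_def covers_def)
  have cov: "\<not> (\<exists>c. b < c \<and> c < a)" using assms by (simp add: prime_quotient_def covers_def)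
  have fY: "f (lo f a b) = b" using lo_img ba by simp
  have lt: "lo f a b < sg f a"
    using lo_le_sg[of a b] fY sg_img[of a] ba by (metis order.not_eq_order_implies_strict order.irrefl)
  have "\<not> (\<exists>z. lo f a b < z \<and> z < sg f a)"
  proof
    assume "\<exists>z. lo f a b < z \<and> z < sg f a"
    then obtain z where z1: "lo f a b < z" and z2: "z < sg f a" by blast
    have "b \<le> f z" using hom_mono[OF h, of "lo f a b" z] z1 fY by simp
    moreover have "f z \<le> a" using hom_mono[OF h, of z "sg f a"] z2 sg_img[of a] by simp
    ultimately have "f z = b \<or> f z = a" using cov by (metis order.not_eq_order_implies_strict)
    then show False
    proof
      assume "f z = b"
      then have "z \<le> lo f a b" using z2 by (intro le_lo) auto
      then show False using z1 by simp
    next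
      assume "f z = a"
      then have "sg f a \<le> z" by (rule sg_le)
      then show False using z2 by simp
    qed
  qed
  then show ?thesis using lt by (simp add: prime_quotient_def covers_def)
qed

end

theorem lemma1:
  fixes \<phi> :: "'a::{finite, complete_lattice} \<Rightarrow> 'b::{finite, complete_lattice}"
    and \<sigma> :: "'b \<Rightarrow> 'a"
    and v w :: 'a and r s :: 'b and rl sl :: 'a
  assumes hom: "lattice_hom \<phi>" and epi: "surj \<phi>"
    and sigma_def: "\<And>y. \<sigma> y = Inf {x. \<phi> x = y}"
    and v_nz: "v \<noteq> bot" and v_sig: "v = \<sigma> (\<phi> v)"
    and vw: "prime_quotient (v, w)"
    and rs: "prime_quotient (r, s)"
    and proj: "projective (r, s) (\<phi> v, \<phi> w)"
    and r_def: "rl = \<sigma> r"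
    and s_def: "sl = Sup {u. u \<le> rl \<and> \<phi> u \<le> s}"
  shows "prime_quotient (rl, sl) \<and> projective (rl, sl) (v, w)"
proof -
  have sig: "\<sigma> = sg \<phi>" using sigma_def by (auto simp: sg_def)
  have rl: "rl = sg \<phi> r" using r_def sig by simp
  have sl: "sl = lo \<phi> r s" using s_def rl by (simp add: lo_def)
  have vs: "sg \<phi> (\<phi> v) = v" using v_sig sig by simp
  have wv: "w < v" and cvw: "\<not> (\<exists>c. w < c \<and> c < v)"
    using vw by (auto simp: prime_quotient_def covers_def)
  have fwv: "\<phi> w \<le> \<phi> v" using hom_mono[OF hom] wv by simp
  have "\<phi> w \<noteq> \<phi> v"
  proof
    assume "\<phi> w = \<phi> v"
    then have "sg \<phi> (\<phi> v) \<le> w" using sg_le[OF hom epi] by metis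
    then show False using vs wv by simp
  qed
  have lw: "lo \<phi> (\<phi> v) (\<phi> w) = w"
  proof -
    have a: "w \<le> lo \<phi> (\<phi> v) (\<phi> w)" using le_lo[OF hom epi] vs wv by simp
    have b: "lo \<phi> (\<phi> v) (\<phi> w) \<le> v" using lo_le_sg[OF hom epi] vs by metis
    have "lo \<phi> (\<phi> v) (\<phi> w) \<noteq> v"
      using lo_img[OF hom epi fwv] \<open>\<phi> w \<noteq> \<phi> v\<close> by metis
    then show ?thesis using a b cvw by (metis order.not_eq_order_implies_strict)
  qed
  have "prime_quotient (rl, sl)" using lift_prime[OF hom epi rs] rl sl by simp
  moreover have "projective (rl, sl) (v, w)"
    using lift_proj[OF hom epi, of "(r, s)" "(\<phi> v, \<phi> w)"] proj rl sl vs lw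
    by (simp add: projective_def)
  ultimately show ?thesis by simp
qed

end
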